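(* For each $i\in\{1,2,3,4\}$ and each $k$ there are complex numbers $\alpha_{m,i}(k)$, $m\in\mathbb Z/D\mathbb Z$, with $$q^{\epsilon_i}(q^{-1}M)^{-ab+p_i}Z^0_k=\sum_{m\in\mathbb Z/D\mathbb Z}\alpha_{m,i}(k)\,\Psi_{2km-ab+p_i},$$ and $\alpha_{0,i}(k)=\alpha_0(k)\,q^{-\frac{a^2+b^2}{D}+\frac D4}$ for all $i$, where $\alpha_0(k)=\langle Z^0_k,\Psi_0\rangle$ is the coefficient of $\Psi_0$ in $Z^0_k$.
   Context: Standing setup. $(E,\omega)$ is a real $2$-dimensional symplectic vector space with a compatible linear complex structure $j$; $K_j=\{\alpha\in E^*\otimes\mathbb C:\alpha(j\cdot)=i\alpha\}$. A half-form line is a complex line $\delta$ with an isomorphism $\varphi:\delta^{\otimes2}\to K_j$; $\delta$ carries the Hermitian metric making $\varphi$ an isometry. For $v\in E\setminus\{0\}$, $\Omega_v$ denotes a vector of $\delta$ with $\varphi(\Omega_v^2)(v)=1$ (unique up to sign). $L\to E$ is the trivial Hermitian line bundle with connection $d-i\alpha$, where $\alpha_x(y)=\frac12\omega(x,y)$, and the compatible holomorphic structure; sections of $L^k\otimes\delta$ are identified with functions $E\to\delta$. For $k\in\mathbb Z_{>0}$ and $x\in E$, $T^*_x$ acts on sections of $L^k\otimes\delta$ by $(T^*_x\Psi)(y)=e^{-\frac{ik}{2}\omega(x,y)}\Psi(x+y)$. For a lattice $\Lambda\subset E$, $\mathcal H^\Lambda_k$ is the space of holomorphic sections $\Psi$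 of $L^k\otimes\delta$ with $T^*_x\Psi=\Psi$ for all $x\in\Lambda$, with inner product $\langle\Psi_1,\Psi_2\rangle=\int_F\langle\Psi_1,\Psi_2\rangle_\delta\,|\omega|$ ($F$ a fundamental domain of $\Lambda$). For sequences, $O(k^{-\infty})$ means $O(k^{-N})$ for every $N$. Knot state. Fix relatively prime positive integers $a,b$; $D=2ab$. Fix a basis $(\lambda,\mu)$ of $E$ with $\omega(\mu,\lambda)=4\pi$. $\mathcal H_k=\mathcal H_k^{\lambda\mathbb Z\oplus\mu\mathbb Z}$; $M=T^*_{\mu/2k}$, $L=T^*_{-\lambda/2k}$ (operators), $q=e^{i\pi/k}$, $q^{s/D}=e^{i\pi s/(kD)}$ for rational $s$. Fix $\Omega_\mu$; $(\xi_\ell)_{\ell\in\mathbb Z/2k\mathbb Z}$ is the orthonormal basis of $\mathcal H_k$ with $M\xi_\ell=q^\ell\xi_\ell$, $L\xi_\ell=\xi_{\ell-1}$, $\xi_0(0)\in\mathbb R_{>0}\Omega_\mu$. $Z^0_k=-\frac{i}{2\sqrt k}\sum_{\ell\in\mathbb Z/2k\mathbb Z}\xi_\ell$. $(\epsilon_i,p_i)_{i=1,\dots,4}$ are $(1,-a-b)$, $(-1,-a+b)$, $(1,a+b)$, $(-1,a-b)$. Second lattice. $\Omega_\lambda$ is the (fixed, $k$-independent) choice of sign with $Z^0_k(0)=\frac{e^{3i\pi/4}}{\sqrt2}(\frac{k}{2\pi})^{1/4}\Omega_\lambda+O(k^{-\infty})$. $R_D=D\mu\mathbb Z\oplus\lambda\mathbb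 Z$, $\mathcal H_{D,k}=\mathcal H_k^{R_D}\supset\mathcal H_k$ ($\dim=2kD$). $S=T^*_{-\lambda/2kD}$, $R=T^*_{(D\mu-2\lambda)/2kD}$. $(\Psi_n)_{n\in\mathbb Z/2kD\mathbb Z}$ is the orthonormal basis of $\mathcal H_{D,k}$ with $S\Psi_n=q^{n/D}\Psi_n$, $R\Psi_n=\Psi_{n+1}$ and phase such that $\Psi_0(0)=e^{i\pi/4}(\frac k{2\pi})^{1/4}\Omega_\lambda+O(k^{-\infty})$. *)

theory Defs
  imports "HOL-Analysis.Analysis"
begin

text \<open>E = complex numbers as a real 2-dimensional space, j = multiplication by the imaginary unit,
  omega x y = Im (cnj x * y) (compatible: omega x (j x) = |x|^2 > 0).
  K_j = complex-linear forms z |-> c z, with the metric induced by g = omega(., j .),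
  so that the form z |-> z has norm sqrt 2.  The half-form line delta is modelled by the
  complex numbers with the standard metric, phi(u tensor u') is the form z |-> u u' z / sqrt 2
  (an isometry).  Sections of L^k tensor delta are functions complex to complex.\<close>

definition omega :: "complex \<Rightarrow> complex \<Rightarrow> real" where
  "omega x y = Im (cnj x * y)"

definition phi :: "complex \<Rightarrow> complex \<Rightarrow> complex" where
  "phi w = (\<lambda>z. w * z / complex_of_real (sqrt 2))"

definition is_Omega :: "complex \<Rightarrow> complex \<Rightarrow> bool" where
  "is_Omega v u \<longleftrightarrow> phi (u * u) v = 1"

definition Tstar :: "nat \<Rightarrow> complex \<Rightarrow> (complex \<Rightarrow> complex) \<Rightarrow> (complex \<Rightarrow> complex)" where
  "Tstar k x \<Psi> = (\<lambda>y. exp (- (\<i> * complex_of_real (real k / 2 * omega x y))) * \<Psi> (x + y))"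

text \<open>Holomorphic sections of L^k tensor delta: for the connection d - i k alpha the
  holomorphic (i.e. nabla^{0,1}-flat) sections are exactly exp(-k|z|^2/4) times entire functions.\<close>
definition holo_sec :: "nat \<Rightarrow> (complex \<Rightarrow> complex) \<Rightarrow> bool" where
  "holo_sec k \<Psi> \<longleftrightarrow> (\<exists>f. f holomorphic_on UNIV \<and>
      (\<forall>z. \<Psi> z = complex_of_real (exp (- (real k * (cmod z)\<^sup>2 / 4))) * f z))"

definition lattice :: "complex \<Rightarrow> complex \<Rightarrow> complex set" where
  "lattice e1 e2 = {of_int m * e1 + of_int n * e2 | m n. True}"

definition Hspace :: "nat \<Rightarrow> complex \<Rightarrow> complex \<Rightarrow> (complex \<Rightarrow> complex) set" where
  "Hspace k e1 e2 = {\<Psi>. holo_sec k \<Psi> \<and> (\<forall>x\<in>lattice e1 e2. Tstar k x \<Psi> = \<Psi>)}"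

definition fund_dom :: "complex \<Rightarrow> complex \<Rightarrow> complex set" where
  "fund_dom e1 e2 = {s *\<^sub>R e1 + t *\<^sub>R e2 | s t. 0 \<le> s \<and> s < 1 \<and> 0 \<le> t \<and> t < 1}"

text \<open>Inner product: integral over a fundamental domain w.r.t. |omega| (= Lebesgue measure).\<close>
definition innerH :: "complex \<Rightarrow> complex \<Rightarrow> (complex \<Rightarrow> complex) \<Rightarrow> (complex \<Rightarrow> complex) \<Rightarrow> complex" where
  "innerH e1 e2 \<Psi>1 \<Psi>2 = (LINT z:fund_dom e1 e2|lborel. \<Psi>1 z * cnj (\<Psi>2 z))"

text \<open>B, indexed by Z/NZ (as int-indexed, N-periodic), is an orthonormal basis of H^Lambda_k.\<close>
definition is_onb :: "nat \<Rightarrow> complex \<Rightarrow> complex \<Rightarrow> int \<Rightarrow> (int \<Rightarrow> complex \<Rightarrow> complex) \<Rightarrow> bool" where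
  "is_onb k e1 e2 N B \<longleftrightarrow>
     (\<forall>n. B n = B (n mod N)) \<and>
     (\<forall>n\<in>{0..<N}. B n \<in> Hspace k e1 e2) \<and>
     (\<forall>n\<in>{0..<N}. \<forall>m\<in>{0..<N}. innerH e1 e2 (B n) (B m) = (if n = m then 1 else 0)) \<and>
     (\<forall>\<Psi>\<in>Hspace k e1 e2. \<exists>c. \<Psi> = (\<lambda>z. \<Sum>n\<in>{0..<N}. c n * B n z))"

definition qpow :: "nat \<Rightarrow> real \<Rightarrow> complex" where
  "qpow k s = exp (\<i> * complex_of_real (pi * s / real k))"

definition Mop :: "nat \<Rightarrow> complex \<Rightarrow> (complex \<Rightarrow> complex) \<Rightarrow> (complex \<Rightarrow> complex)" where
  "Mop k mu = Tstar k (mu / of_nat (2 * k))"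

definition Lop :: "nat \<Rightarrow> complex \<Rightarrow> (complex \<Rightarrow> complex) \<Rightarrow> (complex \<Rightarrow> complex)" where
  "Lop k lam = Tstar k (- lam / of_nat (2 * k))"

definition Sop :: "nat \<Rightarrow> nat \<Rightarrow> complex \<Rightarrow> (complex \<Rightarrow> complex) \<Rightarrow> (complex \<Rightarrow> complex)" where
  "Sop D k lam = Tstar k (- lam / of_nat (2 * k * D))"

definition Rop :: "nat \<Rightarrow> nat \<Rightarrow> complex \<Rightarrow> complex \<Rightarrow> (complex \<Rightarrow> complex) \<Rightarrow> (complex \<Rightarrow> complex)" where
  "Rop D k lam mu = Tstar k ((of_nat D * mu - 2 * lam) / of_nat (2 * k * D))"

definition ipow :: "('a \<Rightarrow> 'a) \<Rightarrow> int \<Rightarrow> 'a \<Rightarrow> 'a" where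
  "ipow T n = (if 0 \<le> n then T ^^ nat n else (inv T) ^^ nat (- n))"

definition is_xi_basis :: "nat \<Rightarrow> complex \<Rightarrow> complex \<Rightarrow> complex \<Rightarrow> (int \<Rightarrow> complex \<Rightarrow> complex) \<Rightarrow> bool" where
  "is_xi_basis k lam mu Om_mu B \<longleftrightarrow>
     is_onb k lam mu (2 * int k) B \<and>
     (\<forall>l. Mop k mu (B l) = (\<lambda>z. qpow k (real_of_int l) * B l z)) \<and>
     (\<forall>l. Lop k lam (B l) = B (l - 1)) \<and>
     (\<exists>r>0. B 0 0 = complex_of_real r * Om_mu)"

text \<open>The basis (Psi_n) of H_{D,k} (up to its global phase normalisation).\<close>
definition is_Psi_basis :: "nat \<Rightarrow> nat \<Rightarrow> complex \<Rightarrow> complex \<Rightarrow> (int \<Rightarrow> complex \<Rightarrow> complex) \<Rightarrow> bool" where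
  "is_Psi_basis D k lam mu B \<longleftrightarrow>
     is_onb k (of_nat D * mu) lam (2 * int k * int D) B \<and>
     (\<forall>n. Sop D k lam (B n) = (\<lambda>z. qpow k (real_of_int n / real D) * B n z)) \<and>
     (\<forall>n. Rop D k lam mu (B n) = B (n + 1))"

definition Z0 :: "nat \<Rightarrow> (int \<Rightarrow> complex \<Rightarrow> complex) \<Rightarrow> complex \<Rightarrow> complex" where
  "Z0 k B = (\<lambda>z. - (\<i> / (2 * complex_of_real (sqrt (real k)))) * (\<Sum>l\<in>{0..<2 * int k}. B l z))"

definition rapid_decay :: "(nat \<Rightarrow> complex) \<Rightarrow> bool" where
  "rapid_decay f \<longleftrightarrow> (\<forall>N::nat. \<exists>C. \<forall>\<^sub>F k in sequentially. cmod (f k) \<le> C / real k ^ N)"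

definition eps_i :: "nat \<Rightarrow> real" where
  "eps_i i = (if i = 1 \<or> i = 3 then 1 else -1)"

definition p_i :: "nat \<Rightarrow> nat \<Rightarrow> nat \<Rightarrow> int" where
  "p_i a b i = (if i = 1 then - int a - int b else if i = 2 then - int a + int b
               else if i = 3 then int a + int b else int a - int b)"

end

theory Submission
  imports Defs
begin


lemma omega_add_left: "omega (x + y) z = omega x z + omega y z"
  by (simp add: omega_def algebra_simps)
lemma omega_add_right: "omega z (x + y) = omega z x + omega z y"
  by (simp add: omega_def algebra_simps)
lemma omega_antisym: "omega y x = - omega x y"
  by (simp add: omega_def)
lemma omega_zero_left[simp]: "omega 0 y = 0" by (simp add: omega_def)
lemma omega_par: "omega (of_real r * x) (of_real s * x) = 0"
  by (simp add: omega_def algebra_simps)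

lemma Tstar_scal: "Tstar k x (\<lambda>z. c * F z) = (\<lambda>z. c * Tstar k x F z)"
  by (simp add: Tstar_def fun_eq_iff algebra_simps)

lemma Tstar_sum: "Tstar k x (\<lambda>z. \<Sum>m\<in>S. c m * F m z) = (\<lambda>z. \<Sum>m\<in>S. c m * Tstar k x (F m) z)"
  by (simp add: Tstar_def fun_eq_iff sum_distrib_left mult.left_commute)

lemma Tstar_zero[simp]: "Tstar k 0 F = F"
  by (simp add: Tstar_def)

lemma Tstar_comp: "Tstar k x (Tstar k y F) =
   (\<lambda>z. exp (- (\<i> * complex_of_real (real k / 2 * omega y x))) * Tstar k (x + y) F z)"
proof
  fix z
  have "Tstar k x (Tstar k y F) z = exp (- (\<i> * complex_of_real (real k / 2 * omega x z)))
     * (exp (- (\<i> * complex_of_real (real k / 2 * omega y (x + z)))) * F (y + (x + z)))"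
    by (simp add: Tstar_def)
  also have "\<dots> = exp (- (\<i> * complex_of_real (real k / 2 * omega y x))) *
     (exp (- (\<i> * complex_of_real (real k / 2 * omega (x+y) z))) * F (x + y + z))"
  proof -
    have e: "exp (- (\<i> * complex_of_real (real k / 2 * omega x z))) *
       exp (- (\<i> * complex_of_real (real k / 2 * omega y (x + z)))) =
      exp (- (\<i> * complex_of_real (real k / 2 * omega y x))) *
       exp (- (\<i> * complex_of_real (real k / 2 * omega (x+y) z)))"
      by (simp add: exp_add[symmetric] omega_add_left omega_add_right algebra_simps)
    have arg: "y + (x + z) = x + y + z" by (simp add: algebra_simps)
    show ?thesis by (simp only: arg mult.assoc[symmetric] e)
  qed
  also have "\<dots> = exp (- (\<i> * complex_of_real (real k / 2 * omega y x))) * Tstar k (x + y) F z"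
    by (simp add: Tstar_def)
  finally show "Tstar k x (Tstar k y F) z = exp (- (\<i> * complex_of_real (real k / 2 * omega y x))) * Tstar k (x + y) F z" .
qed

lemma omega_par': "omega (x * of_real r) (x * of_real s) = 0"
  by (simp add: omega_def algebra_simps)

lemma Tstar_par: "Tstar k (of_real r * x) (Tstar k (of_real s * x) F) = Tstar k (of_real (r + s) * x) F"
  by (simp add: Tstar_comp omega_par' algebra_simps)

lemma Tstar_pow: "(Tstar k x ^^ n) F = Tstar k (of_nat n * x) F"
proof (induction n)
  case 0 then show ?case by simp
next
  case (Suc n)
  have "(Tstar k x ^^ Suc n) F = Tstar k (of_real 1 * x) (Tstar k (of_real (real n) * x) F)"
    using Suc by simp
  also have "\<dots> = Tstar k (of_nat (Suc n) * x) F" by (subst Tstar_par) (simp add: add.commute)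
  finally show ?case .
qed



lemma omega_sl: "omega (of_real r * u) v = r * omega u v" by (simp add: omega_def algebra_simps)
lemma omega_sr: "omega u (of_real r * v) = r * omega u v" by (simp add: omega_def algebra_simps)

lemma qpow_add: "qpow k (s + t) = qpow k s * qpow k t"
  by (simp add: qpow_def exp_add[symmetric] algebra_simps add_divide_distrib)

lemma qpow_pow: "qpow k s ^ j = qpow k (real j * s)"
  by (simp add: qpow_def exp_of_nat_mult[symmetric] algebra_simps)

lemma qpow_nz[simp]: "qpow k s \<noteq> 0" by (simp add: qpow_def)

lemma Tstar_pow_eig: "Tstar k x F = (\<lambda>z. c * F z) \<Longrightarrow> (Tstar k x ^^ j) F = (\<lambda>z. c ^ j * F z)"
proof (induction j)
  case 0 then show ?case by simp
next
  case (Suc j)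
  have "(Tstar k x ^^ Suc j) F = Tstar k x (\<lambda>z. c^j * F z)" using Suc by simp
  also have "\<dots> = (\<lambda>z. c^j * Tstar k x F z)" by (rule Tstar_scal)
  also have "\<dots> = (\<lambda>z. c ^ Suc j * F z)" using Suc(2) by (simp add: algebra_simps)
  finally show ?case .
qed

lemma Tstar_inv_eig:
  assumes "Tstar k x F = (\<lambda>z. c * F z)" "c \<noteq> 0"
  shows "Tstar k (-x) F = (\<lambda>z. inverse c * F z)"
proof -
  have "Tstar k (of_real (-1) * x) (Tstar k (of_real 1 * x) F) = Tstar k (of_real 0 * x) F"
    by (subst Tstar_par) simp
  then have "Tstar k (-x) (\<lambda>z. c * F z) = F" using assms(1) by simp
  then have "(\<lambda>z. c * Tstar k (-x) F z) = F" by (simp add: Tstar_scal)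
  then show ?thesis using assms(2) by (auto simp: fun_eq_iff field_simps)
qed

context
  fixes D k :: nat and lam mu :: complex and Psi :: "int \<Rightarrow> complex \<Rightarrow> complex"
  assumes kpos: "0 < k" and Dpos: "0 < D"
    and om: "omega mu lam = 4 * pi"
    and PB: "is_Psi_basis D k lam mu Psi"
begin

lemma x_eq: "- lam / of_nat (2 * k * D) = of_real (-1 / (2 * k * D)) * lam"
  by (simp add: field_simps)

lemma S_eig: "Tstar k (of_real (-1 / (2 * k * D)) * lam) (Psi n) = (\<lambda>z. qpow k (real_of_int n / real D) * Psi n z)"
  using PB unfolding is_Psi_basis_def Sop_def x_eq by blast

lemma L_eig: "Lop k lam (Psi n) = (\<lambda>z. qpow k (real_of_int n) * Psi n z)"
proof -
  have "- lam / of_nat (2 * k) = of_nat D * (of_real (-1 / (2 * k * D)) * lam)"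
    using Dpos kpos by (simp add: field_simps)
  then have "Lop k lam (Psi n) = (Tstar k (of_real (-1 / (2 * k * D)) * lam) ^^ D) (Psi n)"
    unfolding Lop_def by (simp add: Tstar_pow)
  also have "\<dots> = (\<lambda>z. qpow k (real_of_int n / real D) ^ D * Psi n z)"
    by (rule Tstar_pow_eig[OF S_eig])
  also have "qpow k (real_of_int n / real D) ^ D = qpow k (real_of_int n)"
    using Dpos by (simp add: qpow_pow)
  finally show ?thesis .
qed

lemma Sinv_eig: "Tstar k (of_real (1 / (k * D)) * lam) (Psi n) = (\<lambda>z. qpow k (- 2 * real_of_int n / real D) * Psi n z)"
proof -
  have a: "Tstar k (- (of_real (-1 / (2 * k * D)) * lam)) (Psi n) = (\<lambda>z. inverse (qpow k (real_of_int n / real D)) * Psi n z)"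
    by (rule Tstar_inv_eig[OF S_eig]) simp
  have inv: "inverse (qpow k s) = qpow k (-s)" for s
    using qpow_add[of k s "-s"] by (simp add: qpow_def field_simps)
  have "Tstar k (of_real (1 / (k * D)) * lam) (Psi n) =
     Tstar k (of_real (1 / (2 * k * D)) * lam) (Tstar k (of_real (1 / (2 * k * D)) * lam) (Psi n))"
    by (subst Tstar_par) (simp add: field_simps)
  also have "\<dots> = (\<lambda>z. qpow k (- 2 * real_of_int n / real D) * Psi n z)"
    using a by (simp add: inv Tstar_scal qpow_add[symmetric] mult.assoc[symmetric])
  finally show ?thesis .
qed

lemma M_eig: "Mop k mu (Psi n) = (\<lambda>z. qpow k (- (2 * real_of_int n + 1) / real D) * Psi (n + 1) z)"
proof -
  define y where "y = (of_nat D * mu - 2 * lam) / of_nat (2 * k * D)"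
  define w where "w = of_real (1 / (k * D)) * lam"
  have R: "Tstar k y (Psi m) = Psi (m + 1)" for m
    using PB unfolding is_Psi_basis_def Rop_def y_def by blast
  have y2: "y = of_real (1 / (2*k)) * mu + of_real (-1 / (k * D)) * lam"
    unfolding y_def using kpos Dpos by (simp add: field_simps)
  have muk: "mu / of_nat (2 * k) = y + w"
    unfolding y2 w_def using kpos Dpos by (simp add: field_simps)
  have omlm: "omega lam mu = - 4 * pi" using om omega_antisym[of lam mu] by simp
  have omw: "omega w y = - 2 * pi / (real k ^ 2 * D)"
  proof -
    have ll: "omega lam lam = 0" by (simp add: omega_def)
    have "omega w y = (1 / (k * D)) * (1 / (2*k)) * omega lam mu"
      unfolding w_def y2 by (simp only: omega_add_right omega_sl omega_sr ll) simp
    then show ?thesis using kpos Dpos by (simp add: omlm field_simps power2_eq_square)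
  qed
  have "Tstar k y (Tstar k w (Psi n)) = (\<lambda>z. qpow k (1 / real D) * Mop k mu (Psi n) z)"
  proof -
    have e: "exp (- (\<i> * complex_of_real (real k / 2 * omega w y))) = qpow k (1 / real D)"
      unfolding omw qpow_def using kpos Dpos by (simp add: field_simps power2_eq_square)
    show ?thesis unfolding Tstar_comp e Mop_def muk by (simp add: add.commute)
  qed
  moreover have "Tstar k y (Tstar k w (Psi n)) = (\<lambda>z. qpow k (- 2 * real_of_int n / real D) * Psi (n+1) z)"
    unfolding w_def Sinv_eig Tstar_scal R ..
  ultimately have "(\<lambda>z. qpow k (1 / real D) * Mop k mu (Psi n) z) = (\<lambda>z. qpow k (- 2 * real_of_int n / real D) * Psi (n+1) z)"
    by simp
  moreover have "qpow k (- 2 * real_of_int n / real D) = qpow k (1 / real D) * qpow k (- (2 * real_of_int n + 1) / real D)"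
  proof -
    have "- 2 * real_of_int n / real D = 1 / real D + - (2 * real_of_int n + 1) / real D" using Dpos
      by (simp add: field_simps)
    then show ?thesis by (metis qpow_add)
  qed
  ultimately have "qpow k (1 / real D) * Mop k mu (Psi n) z = qpow k (1 / real D) * (qpow k (- (2 * real_of_int n + 1) / real D) * Psi (n + 1) z)" for z
    by (metis mult.assoc)
  then have "Mop k mu (Psi n) z = qpow k (- (2 * real_of_int n + 1) / real D) * Psi (n + 1) z" for z
    by (subst (asm) mult_left_cancel) simp_all
  then show ?thesis by auto
qed

end


definition lin :: "((complex \<Rightarrow> complex) \<Rightarrow> (complex \<Rightarrow> complex)) \<Rightarrow> bool" where
  "lin T \<longleftrightarrow> (\<forall>(S::int set) c F. T (\<lambda>z. \<Sum>m\<in>S. c m * F m z) = (\<lambda>z. \<Sum>m\<in>S. c m * T (F m) z))"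

lemma lin_scal: "lin T \<Longrightarrow> T (\<lambda>z. c * F z) = (\<lambda>z. c * T F z)"
  unfolding lin_def by (erule allE[of _ "{0}"], erule allE[of _ "\<lambda>_. c"], erule allE[of _ "\<lambda>_. F"]) simp

lemma lin_Tstar: "lin (Tstar k x)"
  unfolding lin_def by (simp add: Tstar_sum)

lemma lin_cmul: "lin T \<Longrightarrow> lin (\<lambda>\<Phi> w. a * T \<Phi> w)"
  unfolding lin_def by (simp add: sum_distrib_left mult.left_commute)

lemma lin_funpow: "lin T \<Longrightarrow> lin (T ^^ n)"
proof (induction n)
  case 0 then show ?case by (simp add: lin_def)
next
  case (Suc n)
  then show ?case unfolding lin_def by (simp add: lin_def)
qed

lemma Tstar_cancel1: "Tstar k x (Tstar k (-x) F) = F"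
  by (simp add: Tstar_comp omega_def)
lemma Tstar_cancel2: "Tstar k (-x) (Tstar k x F) = F"
  by (simp add: Tstar_comp omega_def)

definition Aop :: "nat \<Rightarrow> complex \<Rightarrow> (complex \<Rightarrow> complex) \<Rightarrow> (complex \<Rightarrow> complex)" where
  "Aop k mu = (\<lambda>\<Phi> w. qpow k (-1) * Mop k mu \<Phi> w)"
definition Bop :: "nat \<Rightarrow> complex \<Rightarrow> (complex \<Rightarrow> complex) \<Rightarrow> (complex \<Rightarrow> complex)" where
  "Bop k mu = (\<lambda>\<Phi> w. qpow k 1 * Tstar k (- (mu / of_nat (2 * k))) \<Phi> w)"

lemma qpow_m1_1: "qpow k (-1) * qpow k 1 = 1"
  unfolding qpow_add[symmetric] by (simp add: qpow_def)

lemma qpow_1_m1: "qpow k 1 * qpow k (-1) = 1"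
  using qpow_m1_1 by (simp add: mult.commute)

lemma Bop_Aop: "Bop k mu (Aop k mu x) = x"
    unfolding Aop_def Bop_def Mop_def Tstar_scal Tstar_cancel2
    by (simp add: mult.assoc[symmetric] qpow_1_m1)
lemma Aop_Bop: "Aop k mu (Bop k mu y) = y"
    unfolding Aop_def Bop_def Mop_def Tstar_scal
    using Tstar_cancel1[of k "mu / of_nat (2 * k)" y]
    by (simp add: mult.assoc[symmetric] qpow_m1_1)
lemma inv_Aop: "inv (Aop k mu) = Bop k mu"
  by (rule inv_equality) (rule Bop_Aop, rule Aop_Bop)

lemma qpow_inv: "inverse (qpow k s) = qpow k (-s)"
  by (simp add: qpow_def exp_minus)

definition gph :: "nat \<Rightarrow> int \<Rightarrow> int \<Rightarrow> real" where
  "gph D n N = - real_of_int N - (real_of_int ((n + N)^2) - real_of_int (n^2)) / real D"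

lemma gph_step1: "0 < D \<Longrightarrow> gph D n j + (-1 - (2 * real_of_int (n + j) + 1) / real D) = gph D n (j + 1)"
  unfolding gph_def by (simp add: field_simps power2_eq_square)

lemma gph_step2: "0 < D \<Longrightarrow> gph D n (- j) + (1 + (2 * real_of_int (n - j - 1) + 1) / real D) = gph D n (- (j + 1))"
  unfolding gph_def by (simp add: field_simps power2_eq_square)

lemma lin_Aop: "lin (Aop k mu)"
  unfolding Aop_def Mop_def by (intro lin_cmul lin_Tstar)
lemma lin_Bop: "lin (Bop k mu)"
  unfolding Bop_def by (intro lin_cmul lin_Tstar)

lemma lin_ipow: "lin (ipow (Aop k mu) N)"
  unfolding ipow_def inv_Aop by (simp add: lin_funpow lin_Aop lin_Bop)


context
  fixes D k :: nat and lam mu :: complex and Psi :: "int \<Rightarrow> complex \<Rightarrow> complex"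
  assumes kpos: "0 < k" and Dpos: "0 < D"
    and om: "omega mu lam = 4 * pi"
    and PB: "is_Psi_basis D k lam mu Psi"
begin

lemma A_eig: "Aop k mu (Psi n) = (\<lambda>z. qpow k (-1 - (2 * real_of_int n + 1) / real D) * Psi (n + 1) z)"
proof -
  have "qpow k (-1 - (2 * real_of_int n + 1) / real D) = qpow k (-1) * qpow k (- (2 * real_of_int n + 1) / real D)"
  proof -
    have e: "-1 - (2 * real_of_int n + 1) / real D = -1 + - (2 * real_of_int n + 1) / real D"
      by (simp only: divide_minus_left diff_conv_add_uminus)
    show ?thesis by (simp only: e qpow_add)
  qed
  then show ?thesis unfolding Aop_def M_eig[OF kpos Dpos om PB] by (simp add: mult.assoc)
qed



lemma B_eig: "Bop k mu (Psi (n + 1)) = (\<lambda>z. qpow k (1 + (2 * real_of_int n + 1) / real D) * Psi n z)"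
proof -
  have "Bop k mu (Aop k mu (Psi n)) = Psi n" by (rule Bop_Aop)
  then have "(\<lambda>z. qpow k (-1 - (2 * real_of_int n + 1) / real D) * Bop k mu (Psi (n + 1)) z) = Psi n"
    unfolding A_eig lin_scal[OF lin_Bop] .
  then have "Bop k mu (Psi (n + 1)) z = inverse (qpow k (-1 - (2 * real_of_int n + 1) / real D)) * Psi n z" for z
    by (auto simp: fun_eq_iff field_simps)
  moreover have "- (-1 - (2 * real_of_int n + 1) / real D) = 1 + (2 * real_of_int n + 1) / real D" by simp
  ultimately show ?thesis unfolding qpow_inv by (simp only:) (rule ext, simp)
qed

lemma A_pow: "(Aop k mu ^^ j) (Psi n) = (\<lambda>z. qpow k (gph D n (int j)) * Psi (n + int j) z)"
proof (induction j)
  case 0 then show ?case by (simp add: gph_def qpow_def)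
next
  case (Suc j)
  have qq: "qpow k (gph D n (int j)) * qpow k (-1 - (2 * real_of_int (n + int j) + 1) / real D) = qpow k (gph D n (int j + 1))"
    by (simp only: qpow_add[symmetric] gph_step1[OF Dpos])
  have "(Aop k mu ^^ Suc j) (Psi n) = Aop k mu (\<lambda>z. qpow k (gph D n (int j)) * Psi (n + int j) z)"
    using Suc by simp
  also have "\<dots> = (\<lambda>z. qpow k (gph D n (int j)) * (qpow k (-1 - (2 * real_of_int (n + int j) + 1) / real D) * Psi (n + int j + 1) z))"
    unfolding lin_scal[OF lin_Aop] A_eig ..
  also have "\<dots> = (\<lambda>z. qpow k (gph D n (int (Suc j))) * Psi (n + int (Suc j)) z)"
    unfolding mult.assoc[symmetric] qq by (simp only: of_nat_Suc add.commute[of 1 "int j"] add.assoc)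
  finally show ?case .
qed

lemma B_pow: "(Bop k mu ^^ j) (Psi n) = (\<lambda>z. qpow k (gph D n (- int j)) * Psi (n - int j) z)"
proof (induction j)
  case 0 then show ?case by (simp add: gph_def qpow_def)
next
  case (Suc j)
  have qq: "qpow k (gph D n (- int j)) * qpow k (1 + (2 * real_of_int (n - int j - 1) + 1) / real D) = qpow k (gph D n (- (int j + 1)))"
    by (simp only: qpow_add[symmetric] gph_step2[OF Dpos])
  have "(Bop k mu ^^ Suc j) (Psi n) = Bop k mu (\<lambda>z. qpow k (gph D n (- int j)) * Psi (n - int j - 1 + 1) z)"
    using Suc by simp
  also have "\<dots> = (\<lambda>z. qpow k (gph D n (- int j)) * (qpow k (1 + (2 * real_of_int (n - int j - 1) + 1) / real D) * Psi (n - int j - 1) z))"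
    unfolding lin_scal[OF lin_Bop] B_eig ..
  also have "\<dots> = (\<lambda>z. qpow k (gph D n (- int (Suc j))) * Psi (n - int (Suc j)) z)"
    unfolding mult.assoc[symmetric] qq by (simp only: of_nat_Suc add.commute[of 1 "int j"] diff_diff_eq)
  finally show ?case .
qed

lemma ipow_eig: "ipow (Aop k mu) N (Psi n) = (\<lambda>z. qpow k (gph D n N) * Psi (n + N) z)"
proof (cases "0 \<le> N")
  case True
  then show ?thesis unfolding ipow_def using A_pow[of "nat N" n] by simp
next
  case False
  then show ?thesis unfolding ipow_def inv_Aop using B_pow[of "nat (- N)" n] by simp
qed

end


lemma Tstar_sum1: "Tstar k x (\<lambda>z. \<Sum>m\<in>S. F m z) = (\<lambda>z. \<Sum>m\<in>S. Tstar k x (F m) z)"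
  using Tstar_sum[where k=k and x=x and S=S and c="\<lambda>_. 1" and F=F] by simp

lemma sum_mod_shift:
  fixes N c :: int and f :: "int \<Rightarrow> 'a::comm_monoid_add"
  assumes "0 < N"
  shows "(\<Sum>l\<in>{0..<N}. f ((l + c) mod N)) = (\<Sum>l\<in>{0..<N}. f l)"
proof (rule sum.reindex_bij_witness[where i = "\<lambda>l. (l - c) mod N" and j = "\<lambda>l. (l + c) mod N"])
  fix a assume a: "a \<in> {0..<N}"
  have "((a + c) mod N - c) mod N = (a + c - c) mod N" by (simp add: mod_diff_left_eq)
  then show "((a + c) mod N - c) mod N = a" using a by simp
next
  fix a assume a: "a \<in> {0..<N}"
  have "((a - c) mod N + c) mod N = (a - c + c) mod N" by (simp add: mod_add_left_eq)
  then show "((a - c) mod N + c) mod N = a" using a by simp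
qed (use assms in auto)

lemma sum_filter_dvd:
  fixes K D :: nat and g :: "int \<Rightarrow> 'a::comm_monoid_add"
  assumes "0 < K"
  shows "(\<Sum>n\<in>{0..<int K * int D}. if int K dvd n then g n else 0) = (\<Sum>m\<in>{0..<int D}. g (int K * m))"
proof -
  have "(\<Sum>n\<in>{0..<int K * int D}. if int K dvd n then g n else 0) = sum g {n\<in>{0..<int K * int D}. int K dvd n}"
    by (rule sum.inter_filter[symmetric]) simp
  also have "{n\<in>{0..<int K * int D}. int K dvd n} = (\<lambda>m. int K * m) ` {0..<int D}"
  proof (rule set_eqI, rule iffI)
    fix n assume "n \<in> {n\<in>{0..<int K * int D}. int K dvd n}"
    then obtain m where n: "n = int K * m" and b: "0 \<le> int K * m" "int K * m < int K * int D" by auto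
    have "0 \<le> m" using b(1) assms by (simp add: zero_le_mult_iff)
    moreover have "m < int D" using b(2) assms by simp
    ultimately show "n \<in> (\<lambda>m. int K * m) ` {0..<int D}" using n by auto
  next
    fix n assume "n \<in> (\<lambda>m. int K * m) ` {0..<int D}"
    then show "n \<in> {n\<in>{0..<int K * int D}. int K dvd n}" using assms by auto
  qed
  also have "sum g ((\<lambda>m. int K * m) ` {0..<int D}) = (\<Sum>m\<in>{0..<int D}. g (int K * m))"
    by (rule sum.reindex_cong[where l = "\<lambda>m. int K * m"]) (use assms in \<open>auto simp: inj_on_def\<close>)
  finally show ?thesis .
qed

lemma qpow_eq_1: "0 < k \<Longrightarrow> qpow k (real_of_int n) = 1 \<longleftrightarrow> 2 * int k dvd n"
proof -
  assume k: "0 < k"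
  have "qpow k (real_of_int n) = 1 \<longleftrightarrow> (\<exists>j::int. pi * real_of_int n / real k = real_of_int (2 * j) * pi)"
    unfolding qpow_def exp_eq_1 by simp
  also have "\<dots> \<longleftrightarrow> (\<exists>j::int. n = 2 * int k * j)"
  proof -
    have "pi * real_of_int n / real k = real_of_int (2 * j) * pi \<longleftrightarrow> n = 2 * int k * j" for j
    proof -
      have "pi * real_of_int n / real k = real_of_int (2 * j) * pi \<longleftrightarrow> real_of_int n = real_of_int (2 * int k * j)"
        using k pi_gt_zero by (auto simp: field_simps)
      then show ?thesis by (simp only: of_int_eq_iff)
    qed
    then show ?thesis by simp
  qed
  also have "\<dots> \<longleftrightarrow> 2 * int k dvd n" by (auto simp: dvd_def)
  finally show ?thesis .
qed

lemma avg_root: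
  assumes k: "0 < k"
  shows "(\<Sum>j<2 * k. qpow k (real_of_int n) ^ j) / of_nat (2 * k) = (if 2 * int k dvd n then 1 else 0)"
proof (cases "2 * int k dvd n")
  case True
  then have "qpow k (real_of_int n) = 1" using qpow_eq_1[OF k] by simp
  then show ?thesis using True k by simp
next
  case False
  then have ne: "qpow k (real_of_int n) \<noteq> 1" using qpow_eq_1[OF k] by simp
  have "qpow k (real_of_int n) ^ (2 * k) = qpow k (real (2 * k) * real_of_int n)" by (rule qpow_pow)
  also have "\<dots> = 1" unfolding qpow_def using k exp_eq_1
    by (simp add: exp_eq_1)
  finally have "(\<Sum>j<2 * k. qpow k (real_of_int n) ^ j) = 0"
    using geometric_sum[OF ne, of "2 * k"] by simp
  then show ?thesis using False by simp
qed


context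
  fixes D k :: nat and lam mu Om :: complex and Psi xi :: "int \<Rightarrow> complex \<Rightarrow> complex"
  assumes kpos: "0 < k" and Dpos: "0 < D"
    and om: "omega mu lam = 4 * pi"
    and PB: "is_Psi_basis D k lam mu Psi"
    and XB: "is_xi_basis k lam mu Om xi"
begin

lemma xi_H: "l \<in> {0..<2 * int k} \<Longrightarrow> xi l \<in> Hspace k lam mu"
  using XB unfolding is_xi_basis_def is_onb_def by blast

lemma lattice_sub: "x \<in> lattice (of_nat D * mu) lam \<Longrightarrow> x \<in> lattice lam mu"
proof -
  assume "x \<in> lattice (of_nat D * mu) lam"
  then obtain m n where x: "x = of_int m * (of_nat D * mu) + of_int n * lam"
    unfolding lattice_def by auto
  have "x = of_int n * lam + of_int (m * int D) * mu" unfolding x by (simp add: algebra_simps)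
  then show ?thesis unfolding lattice_def by blast
qed

lemma Z0_H: "Z0 k xi \<in> Hspace k (of_nat D * mu) lam"
proof -
  define C where "C = - (\<i> / (2 * complex_of_real (sqrt (real k))))"
  have Z: "Z0 k xi = (\<lambda>z. C * (\<Sum>l\<in>{0..<2 * int k}. xi l z))" unfolding Z0_def C_def ..
  have "\<forall>l\<in>{0..<2 * int k}. \<exists>f. f holomorphic_on UNIV \<and>
      (\<forall>z. xi l z = complex_of_real (exp (- (real k * (cmod z)\<^sup>2 / 4))) * f z)"
    using xi_H unfolding Hspace_def holo_sec_def by blast
  then obtain F where F: "\<And>l. l \<in> {0..<2 * int k} \<Longrightarrow> F l holomorphic_on UNIV \<and>
      (\<forall>z. xi l z = complex_of_real (exp (- (real k * (cmod z)\<^sup>2 / 4))) * F l z)"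
    by metis
  have hs: "holo_sec k (Z0 k xi)"
    unfolding holo_sec_def
  proof (intro exI conjI allI)
    show "(\<lambda>z. C * (\<Sum>l\<in>{0..<2 * int k}. F l z)) holomorphic_on UNIV"
      using F by (intro holomorphic_intros) auto
    fix z
    show "Z0 k xi z = complex_of_real (exp (- (real k * (cmod z)\<^sup>2 / 4))) * (C * (\<Sum>l\<in>{0..<2 * int k}. F l z))"
      unfolding Z using F by (simp add: sum_distrib_left mult.left_commute)
  qed
  have inv: "Tstar k x (Z0 k xi) = Z0 k xi" if "x \<in> lattice (of_nat D * mu) lam" for x
  proof -
    have "Tstar k x (xi l) = xi l" if "l \<in> {0..<2 * int k}" for l
      using xi_H[OF that] lattice_sub[OF \<open>x \<in> _\<close>] unfolding Hspace_def by blast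
    then show ?thesis unfolding Z Tstar_scal Tstar_sum1 by simp
  qed
  show ?thesis unfolding Hspace_def using hs inv by blast
qed

lemma L_Z0: "Lop k lam (Z0 k xi) = Z0 k xi"
proof -
  have per: "xi l = xi (l mod (2 * int k))" for l
    using XB unfolding is_xi_basis_def is_onb_def by blast
  have sh: "Lop k lam (xi l) = xi (l - 1)" for l
    using XB unfolding is_xi_basis_def by blast
  have "(\<Sum>l\<in>{0..<2 * int k}. xi (l - 1) z) = (\<Sum>l\<in>{0..<2 * int k}. xi l z)" for z
  proof -
    have "(\<Sum>l\<in>{0..<2 * int k}. xi (l - 1) z) = (\<Sum>l\<in>{0..<2 * int k}. (\<lambda>l. xi l z) ((l + (-1)) mod (2 * int k)))"
      by (rule sum.cong) (use per in auto)
    also have "\<dots> = (\<Sum>l\<in>{0..<2 * int k}. xi l z)"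
      by (rule sum_mod_shift) (use kpos in simp)
    finally show ?thesis .
  qed
  then show ?thesis unfolding Z0_def Lop_def Tstar_scal Tstar_sum1
    using sh unfolding Lop_def by simp
qed


lemma Z0_exp: "\<exists>c. Z0 k xi = (\<lambda>z. \<Sum>n\<in>{0..<2 * int k * int D}. c n * Psi n z)"
  using PB Z0_H unfolding is_Psi_basis_def is_onb_def by blast

lemma Lpow_Psi: "(Lop k lam ^^ j) (Psi n) = (\<lambda>z. qpow k (real_of_int n) ^ j * Psi n z)"
  using Tstar_pow_eig[OF L_eig[OF kpos Dpos om PB, unfolded Lop_def]] unfolding Lop_def .

lemma Z0_avg:
  assumes c: "Z0 k xi = (\<lambda>z. \<Sum>n\<in>{0..<2 * int k * int D}. c n * Psi n z)"
  shows "Z0 k xi = (\<lambda>z. \<Sum>m\<in>{0..<int D}. c (2 * int k * m) * Psi (2 * int k * m) z)"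
proof
  fix z
  let ?I = "{0..<2 * int k * int D}"
  have fix_: "(Lop k lam ^^ j) (Z0 k xi) = Z0 k xi" for j
    by (induction j) (simp_all add: L_Z0)
  have lin: "lin (Lop k lam ^^ j)" for j unfolding Lop_def by (intro lin_funpow lin_Tstar)
  have each: "Z0 k xi z = (\<Sum>n\<in>?I. c n * (qpow k (real_of_int n) ^ j * Psi n z))" for j
  proof -
    have "Z0 k xi = (Lop k lam ^^ j) (\<lambda>z. \<Sum>n\<in>?I. c n * Psi n z)" using fix_[of j] c by simp
    also have "\<dots> = (\<lambda>z. \<Sum>n\<in>?I. c n * (Lop k lam ^^ j) (Psi n) z)"
      using lin[of j] unfolding lin_def by blast
    finally show ?thesis unfolding Lpow_Psi by simp
  qed
  have "Z0 k xi z = (\<Sum>j<2 * k. Z0 k xi z) / of_nat (2 * k)" using kpos by simp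
  also have "\<dots> = (\<Sum>j<2 * k. \<Sum>n\<in>?I. c n * (qpow k (real_of_int n) ^ j * Psi n z)) / of_nat (2 * k)"
    using each by simp
  also have "\<dots> = (\<Sum>n\<in>?I. c n * Psi n z * ((\<Sum>j<2 * k. qpow k (real_of_int n) ^ j) / of_nat (2 * k)))"
    by (subst sum.swap) (simp add: sum_divide_distrib sum_distrib_left sum_distrib_right algebra_simps)
  also have "\<dots> = (\<Sum>n\<in>{0..<int (2 * k) * int D}. if int (2 * k) dvd n then c n * Psi n z else 0)"
    apply (rule sum.cong)
     apply simp
    subgoal for n by (subst avg_root[OF kpos]) simp
    done
  also have "\<dots> = (\<Sum>m\<in>{0..<int D}. c (2 * int k * m) * Psi (2 * int k * m) z)"
    by (subst sum_filter_dvd) (use kpos in simp_all)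
  finally show "Z0 k xi z = (\<Sum>m\<in>{0..<int D}. c (2 * int k * m) * Psi (2 * int k * m) z)" .
qed

end


lemma omega_decomp: "omega z e2 *\<^sub>R e1 + omega e1 z *\<^sub>R e2 = omega e1 e2 *\<^sub>R z"
  by (simp add: omega_def complex_eq_iff algebra_simps scaleR_conv_of_real)

lemma fund_dom_eq:
  assumes w: "omega e1 e2 \<noteq> 0"
  shows "fund_dom e1 e2 = (\<lambda>z. omega z e2 / omega e1 e2) -` {0..<1} \<inter> (\<lambda>z. omega e1 z / omega e1 e2) -` {0..<1}"
proof (rule set_eqI, rule iffI)
  fix z assume "z \<in> fund_dom e1 e2"
  then obtain s t where z: "z = s *\<^sub>R e1 + t *\<^sub>R e2" and st: "0 \<le> s" "s < 1" "0 \<le> t" "t < 1"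
    unfolding fund_dom_def by blast
  have ee: "omega e1 e1 = 0" "omega e2 e2 = 0" by (simp_all add: omega_def)
  have "omega z e2 = s * omega e1 e2" "omega e1 z = t * omega e1 e2"
    unfolding z scaleR_conv_of_real by (simp_all add: omega_add_left omega_add_right omega_sl omega_sr ee)
  then show "z \<in> (\<lambda>z. omega z e2 / omega e1 e2) -` {0..<1} \<inter> (\<lambda>z. omega e1 z / omega e1 e2) -` {0..<1}"
    using st w by simp
next
  fix z assume "z \<in> (\<lambda>z. omega z e2 / omega e1 e2) -` {0..<1} \<inter> (\<lambda>z. omega e1 z / omega e1 e2) -` {0..<1}"
  then have st: "0 \<le> omega z e2 / omega e1 e2" "omega z e2 / omega e1 e2 < 1"
    "0 \<le> omega e1 z / omega e1 e2" "omega e1 z / omega e1 e2 < 1" by auto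
  have "z = (omega z e2 / omega e1 e2) *\<^sub>R e1 + (omega e1 z / omega e1 e2) *\<^sub>R e2"
  proof -
    have "(1 / omega e1 e2) *\<^sub>R (omega z e2 *\<^sub>R e1 + omega e1 z *\<^sub>R e2) = z"
      unfolding omega_decomp using w by simp
    then show ?thesis by (simp add: scaleR_add_right)
  qed
  then show "z \<in> fund_dom e1 e2" unfolding fund_dom_def using st by blast
qed

lemma omega_cont1: "continuous_on UNIV (\<lambda>z. omega z e2 / c)"
  unfolding omega_def divide_inverse by (intro continuous_intros)
lemma omega_cont2: "continuous_on UNIV (\<lambda>z. omega e1 z / c)"
  unfolding omega_def divide_inverse by (intro continuous_intros)

lemma fund_dom_sets: "omega e1 e2 \<noteq> 0 \<Longrightarrow> fund_dom e1 e2 \<in> sets lborel"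
proof -
  assume w: "omega e1 e2 \<noteq> 0"
  have m1: "(\<lambda>z. omega z e2 / omega e1 e2) \<in> borel_measurable borel"
    by (rule borel_measurable_continuous_onI[OF omega_cont1])
  have m2: "(\<lambda>z. omega e1 z / omega e1 e2) \<in> borel_measurable borel"
    by (rule borel_measurable_continuous_onI[OF omega_cont2])
  have "(\<lambda>z. omega z e2 / omega e1 e2) -` {0..<1} \<inter> space borel \<in> sets borel"
    by (rule measurable_sets[OF m1]) simp
  moreover have "(\<lambda>z. omega e1 z / omega e1 e2) -` {0..<1} \<inter> space borel \<in> sets borel"
    by (rule measurable_sets[OF m2]) simp
  ultimately show ?thesis unfolding fund_dom_eq[OF w] by auto
qed

lemma holo_meas: "holo_sec k F \<Longrightarrow> F \<in> borel_measurable lborel"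
proof -
  assume "holo_sec k F"
  then obtain f where f: "f holomorphic_on UNIV" and F: "\<And>z. F z = complex_of_real (exp (- (real k * (cmod z)\<^sup>2 / 4))) * f z"
    unfolding holo_sec_def by blast
  have "continuous_on UNIV f" using f by (rule holomorphic_on_imp_continuous_on)
  then have "continuous_on UNIV (\<lambda>z. complex_of_real (exp (- (real k * (cmod z)\<^sup>2 / 4))) * f z)"
    by (intro continuous_intros) auto
  then have "F \<in> borel_measurable borel" unfolding F[abs_def] by (rule borel_measurable_continuous_onI)
  then show ?thesis by simp
qed

lemma innerH_expansion:
  fixes N :: int and B :: "int \<Rightarrow> complex \<Rightarrow> complex"
  assumes onb: "is_onb k e1 e2 N B" and w: "omega e1 e2 \<noteq> 0" and n0: "n0 \<in> {0..<N}"
  shows "innerH e1 e2 (\<lambda>z. \<Sum>n\<in>{0..<N}. c n * B n z) (B n0) = c n0"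
proof -
  let ?A = "fund_dom e1 e2"
  have A: "?A \<in> sets lborel" by (rule fund_dom_sets[OF w])
  have meas: "B n \<in> borel_measurable lborel" if "n \<in> {0..<N}" for n
    using onb that unfolding is_onb_def Hspace_def by (blast intro: holo_meas)
  have orth: "innerH e1 e2 (B n) (B m) = (if n = m then 1 else 0)" if "n \<in> {0..<N}" "m \<in> {0..<N}" for n m
    using onb that unfolding is_onb_def by blast
  have diag: "set_integrable lborel ?A (\<lambda>z. B n z * cnj (B n z))" if "n \<in> {0..<N}" for n
  proof (rule ccontr)
    assume "\<not> ?thesis"
    then have "innerH e1 e2 (B n) (B n) = 0"
      unfolding innerH_def set_lebesgue_integral_def set_integrable_def by (rule not_integrable_integral_eq)
    then show False using orth[OF that that] by simp
  qed
  have int: "set_integrable lborel ?A (\<lambda>z. B n z * cnj (B n0 z))" if "n \<in> {0..<N}" for n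
  proof (rule set_integrable_bound[where f = "\<lambda>z. B n z * cnj (B n z) + B n0 z * cnj (B n0 z)"])
    show "set_integrable lborel ?A (\<lambda>z. B n z * cnj (B n z) + B n0 z * cnj (B n0 z))"
      using diag[OF that] diag[OF n0] by (rule set_integral_add)
    show "set_borel_measurable lborel ?A (\<lambda>z. B n z * cnj (B n0 z))"
    proof -
      have cc: "cnj \<in> borel_measurable borel"
        by (rule borel_measurable_continuous_onI) (simp add: continuous_on_cnj continuous_on_id)
      have "(\<lambda>x. cnj (B n0 x)) \<in> borel_measurable lborel"
        using measurable_compose[OF meas[OF n0] cc] by simp
      then show ?thesis
        unfolding set_borel_measurable_def using meas[OF that] A
        by (intro borel_measurable_scaleR borel_measurable_indicator borel_measurable_times) auto
    qed
    show "AE x in lborel. x \<in> ?A \<longrightarrow> norm (B n x * cnj (B n0 x)) \<le> norm (B n x * cnj (B n x) + B n0 x * cnj (B n0 x))"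
    proof (rule AE_I2, rule impI)
      fix x
      have e: "B n x * cnj (B n x) + B n0 x * cnj (B n0 x) = complex_of_real ((cmod (B n x))\<^sup>2 + (cmod (B n0 x))\<^sup>2)"
        by (simp only: complex_norm_square of_real_add)
      have "cmod (B n x) * cmod (B n0 x) \<le> (cmod (B n x))\<^sup>2 + (cmod (B n0 x))\<^sup>2"
        using sum_squares_bound[of "cmod (B n x)" "cmod (B n0 x)"]
          mult_nonneg_nonneg[OF norm_ge_zero norm_ge_zero, of "B n x" "B n0 x"] by linarith
      then show "norm (B n x * cnj (B n0 x)) \<le> norm (B n x * cnj (B n x) + B n0 x * cnj (B n0 x))"
        unfolding e norm_mult complex_mod_cnj norm_of_real by simp
    qed
  qed
  have "innerH e1 e2 (\<lambda>z. \<Sum>n\<in>{0..<N}. c n * B n z) (B n0)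
      = integral\<^sup>L lborel (\<lambda>z. \<Sum>n\<in>{0..<N}. indicator ?A z *\<^sub>R (c n * (B n z * cnj (B n0 z))))"
    unfolding innerH_def set_lebesgue_integral_def
    by (simp add: sum_distrib_right scaleR_sum_right mult.assoc)
  also have "\<dots> = (\<Sum>n\<in>{0..<N}. integral\<^sup>L lborel (\<lambda>z. indicator ?A z *\<^sub>R (c n * (B n z * cnj (B n0 z)))))"
  proof (rule Bochner_Integration.integral_sum[where f="\<lambda>n z. indicator ?A z *\<^sub>R (c n * (B n z * cnj (B n0 z)))"])
    fix n assume "n \<in> {0..<N}"
    then have "set_integrable lborel ?A (\<lambda>z. c n * (B n z * cnj (B n0 z)))"
      using int by (intro set_integrable_mult_right) auto
    then show "integrable lborel (\<lambda>z. indicator ?A z *\<^sub>R (c n * (B n z * cnj (B n0 z))))"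
      unfolding set_integrable_def .
  qed
  also have "\<dots> = (\<Sum>n\<in>{0..<N}. c n * innerH e1 e2 (B n) (B n0))"
    unfolding innerH_def set_lebesgue_integral_def[symmetric] by simp
  also have "\<dots> = (\<Sum>n\<in>{0..<N}. if n = n0 then c n else 0)"
    by (rule sum.cong) (use orth n0 in auto)
  also have "\<dots> = c n0" using n0 by simp
  finally show ?thesis .
qed



lemma phase_id:
  assumes "0 < a" "0 < b" "i \<in> {1..4::nat}"
  shows "eps_i i + gph (2*a*b) 0 (p_i a b i - int a * int b) =
     - (real a ^ 2 + real b ^ 2) / real (2 * a * b) + real (2 * a * b) / 4"
proof -
  have i: "i = 1 \<or> i = 2 \<or> i = 3 \<or> i = 4" using assms(3) by auto
  have ab: "real a > 0" "real b > 0" using assms by auto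
  show ?thesis using i ab
    by (elim disjE) (simp_all add: gph_def eps_i_def p_i_def field_simps power2_eq_square)
qed

theorem mainTheorem6:
  fixes a b :: nat and lam mu Om_mu Om_lam :: complex
    and xi Psi :: "nat \<Rightarrow> int \<Rightarrow> complex \<Rightarrow> complex"
  assumes "0 < a" "0 < b" "coprime a b"
    and "omega mu lam = 4 * pi"
    and "is_Omega mu Om_mu"
    and "\<forall>k>0. is_xi_basis k lam mu Om_mu (xi k)"
    and "is_Omega lam Om_lam"
    and "rapid_decay (\<lambda>k. Z0 k (xi k) 0 - exp (3 * \<i> * pi / 4) / complex_of_real (sqrt 2)
            * complex_of_real ((real k / (2 * pi)) powr (1/4)) * Om_lam)"
    and "\<forall>k>0. is_Psi_basis (2 * a * b) k lam mu (Psi k)"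
    and "rapid_decay (\<lambda>k. Psi k 0 0 - exp (\<i> * pi / 4)
            * complex_of_real ((real k / (2 * pi)) powr (1/4)) * Om_lam)"
  shows "\<forall>k>0. \<forall>i\<in>{1..4::nat}. \<exists>\<alpha> :: int \<Rightarrow> complex.
           (\<lambda>z. qpow k (eps_i i) *
              ipow (\<lambda>\<Phi> w. qpow k (-1) * Mop k mu \<Phi> w) (p_i a b i - int a * int b) (Z0 k (xi k)) z)
           = (\<lambda>z. \<Sum>m\<in>{0..<int (2 * a * b)}.
                  \<alpha> m * Psi k (2 * int k * m - int a * int b + p_i a b i) z)
         \<and> \<alpha> 0 = innerH (of_nat (2 * a * b) * mu) lam (Z0 k (xi k)) (Psi k 0)
                  * qpow k (- (real a ^ 2 + real b ^ 2) / real (2 * a * b) + real (2 * a * b) / 4)"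
proof (intro allI impI ballI)
  fix k :: nat and i :: nat
  assume kpos: "0 < k" and iI: "i \<in> {1..4}"
  have Dpos: "0 < 2 * a * b" using assms(1,2) by simp
  have om: "omega mu lam = 4 * pi" by (rule assms(4))
  have PB: "is_Psi_basis (2 * a * b) k lam mu (Psi k)" using assms(9) kpos by blast
  have XB: "is_xi_basis k lam mu Om_mu (xi k)" using assms(6) kpos by blast
  obtain c where c: "Z0 k (xi k) = (\<lambda>z. \<Sum>n\<in>{0..<2 * int k * int (2 * a * b)}. c n * Psi k n z)"
    using Z0_exp[OF kpos Dpos om PB XB] by blast
  have hc: "Z0 k (xi k) = (\<lambda>z. \<Sum>m\<in>{0..<int (2 * a * b)}. c (2 * int k * m) * Psi k (2 * int k * m) z)"
    by (rule Z0_avg[OF kpos Dpos om PB XB c])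
  define N where "N = p_i a b i - int a * int b"
  define \<alpha> where "\<alpha> m = qpow k (eps_i i) * c (2 * int k * m) * qpow k (gph (2 * a * b) (2 * int k * m) N)" for m
  have Aeq: "(\<lambda>\<Phi> w. qpow k (-1) * Mop k mu \<Phi> w) = Aop k mu" unfolding Aop_def ..
  have "ipow (Aop k mu) N (Z0 k (xi k)) =
      (\<lambda>z. \<Sum>m\<in>{0..<int (2 * a * b)}. c (2 * int k * m) * ipow (Aop k mu) N (Psi k (2 * int k * m)) z)"
    unfolding hc using lin_ipow[of k mu N, unfolded lin_def, rule_format,
      where S="{0..<int (2 * a * b)}" and c="\<lambda>m. c (2 * int k * m)" and F="\<lambda>m. Psi k (2 * int k * m)"] by simp
  then have ip: "ipow (Aop k mu) N (Z0 k (xi k)) =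
      (\<lambda>z. \<Sum>m\<in>{0..<int (2 * a * b)}. c (2 * int k * m) * (qpow k (gph (2 * a * b) (2 * int k * m) N) * Psi k (2 * int k * m + N) z))"
    unfolding ipow_eig[OF kpos Dpos om PB] .
  have eq1: "(\<lambda>z. qpow k (eps_i i) * ipow (\<lambda>\<Phi> w. qpow k (-1) * Mop k mu \<Phi> w) (p_i a b i - int a * int b) (Z0 k (xi k)) z)
      = (\<lambda>z. \<Sum>m\<in>{0..<int (2 * a * b)}. \<alpha> m * Psi k (2 * int k * m - int a * int b + p_i a b i) z)"
    unfolding Aeq N_def[symmetric] ip \<alpha>_def
    by (simp add: sum_distrib_left N_def algebra_simps)
  have onb: "is_onb k (of_nat (2 * a * b) * mu) lam (2 * int k * int (2 * a * b)) (Psi k)"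
    using PB unfolding is_Psi_basis_def by blast
  have w: "omega (of_nat (2 * a * b) * mu) lam \<noteq> 0"
    using om Dpos omega_sl[of "real (2*a*b)" mu lam] by simp
  have c0: "c 0 = innerH (of_nat (2 * a * b) * mu) lam (Z0 k (xi k)) (Psi k 0)"
    unfolding c by (rule innerH_expansion[OF onb w, symmetric]) (use kpos Dpos in simp)
  have "\<alpha> 0 = c 0 * (qpow k (eps_i i) * qpow k (gph (2 * a * b) 0 N))"
    unfolding \<alpha>_def by simp
  also have "qpow k (eps_i i) * qpow k (gph (2 * a * b) 0 N) =
      qpow k (- (real a ^ 2 + real b ^ 2) / real (2 * a * b) + real (2 * a * b) / 4)"
    unfolding qpow_add[symmetric] N_def using phase_id[OF assms(1,2) iI] by simp
  finally have eq2: "\<alpha> 0 = innerH (of_nat (2 * a * b) * mu) lam (Z0 k (xi k)) (Psi k 0)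
      * qpow k (- (real a ^ 2 + real b ^ 2) / real (2 * a * b) + real (2 * a * b) / 4)"
    unfolding c0 .
  show "\<exists>\<alpha> :: int \<Rightarrow> complex.
           (\<lambda>z. qpow k (eps_i i) *
              ipow (\<lambda>\<Phi> w. qpow k (-1) * Mop k mu \<Phi> w) (p_i a b i - int a * int b) (Z0 k (xi k)) z)
           = (\<lambda>z. \<Sum>m\<in>{0..<int (2 * a * b)}.
                  \<alpha> m * Psi k (2 * int k * m - int a * int b + p_i a b i) z)
         \<and> \<alpha> 0 = innerH (of_nat (2 * a * b) * mu) lam (Z0 k (xi k)) (Psi k 0)
                  * qpow k (- (real a ^ 2 + real b ^ 2) / real (2 * a * b) + real (2 * a * b) / 4)"
    using eq1 eq2 by blast
qed


end
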